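(* Let $\beta\in(1,2)$, let $\tau>0$, $n\ge 1$ an integer, and $t_k=k\tau$ for $k=0,1,\dots,n$. Suppose $v\in C^{2}[0,t_n]\cap C^{3}(0,t_n]$ with $|v'''|\in L^1(0,t_n]$, and write $v^k=v(t_k)$. Define $$b_0^{(\beta)}=\frac{1}{\Gamma(3-\beta)},\qquad b_m^{(\beta)}=\frac{1}{\Gamma(3-\beta)}\big[(m+1)^{2-\beta}-m^{2-\beta}\big],\quad m\ge 1,$$ and $$\Delta_t^{\beta}v^n=\frac{1}{\tau^{\beta}}\Big[\sum_{k=2}^{n} b_{n-k}^{(\beta)}\big(v^k-2v^{k-1}+v^{k-2}\big)+2b_{n-1}^{(\beta)}\big(v^1-v^0\big)\Big].$$ Then $${}_0^CD_t^{\beta}v(t_n)=\Delta_t^{\beta}v^n-\frac{2\,b_{n-1}^{(\beta)}}{\tau^{\beta-1}}\,v'(t_0)+R_2[v(t_n)],$$ where the remainder satisfies $$\big|R_2[v(t_n)]\big|\le \frac{9\,t_n^{2-\beta}}{\Gamma(3-\beta)}\,\max_{0\le k\le n-1}\int_0^1\big|v'''(t_k+\theta\tau)\big|\,d\theta\cdot\tau .$$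
   Context: For $\beta\in(1,2)$ and a function $v$ on $[0,T]$ with $v''$ integrable, the Caputo fractional derivative of order $\beta$ is ${}_0^CD_t^{\beta}v(t)=\frac{1}{\Gamma(2-\beta)}\int_0^t (t-s)^{1-\beta}v''(s)\,ds$. $\Gamma$ denotes the Gamma function. An empty sum (when $n=1$) is zero. *)

theory Defs
  imports "HOL-Analysis.Analysis"
begin

text \<open>Caputo derivative of order beta, given the second derivative v2 of v:
  (1/Gamma(2-beta)) * integral_0^t (t-s)^(1-beta) v''(s) ds.\<close>
definition caputo :: "real \<Rightarrow> (real \<Rightarrow> real) \<Rightarrow> real \<Rightarrow> real" where
  "caputo \<beta> v2 t = 1 / Gamma (2 - \<beta>) * integral {0..t} (\<lambda>s. (t - s) powr (1 - \<beta>) * v2 s)"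

definition bcoef :: "real \<Rightarrow> nat \<Rightarrow> real" where
  "bcoef \<beta> m = (if m = 0 then 1 / Gamma (3 - \<beta>)
     else (real (m + 1) powr (2 - \<beta>) - real m powr (2 - \<beta>)) / Gamma (3 - \<beta>))"

definition Delta_t :: "real \<Rightarrow> real \<Rightarrow> (real \<Rightarrow> real) \<Rightarrow> nat \<Rightarrow> real" where
  "Delta_t \<beta> \<tau> v n = 1 / \<tau> powr \<beta> *
     ((\<Sum>k = 2..n. bcoef \<beta> (n - k) *
         (v (real k * \<tau>) - 2 * v (real (k - 1) * \<tau>) + v (real (k - 2) * \<tau>)))
      + 2 * bcoef \<beta> (n - 1) * (v \<tau> - v 0))"

end

theory Submission
  imports Defs
begin


lemma my_mvt:
  fixes f f' :: "real \<Rightarrow> real"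
  assumes "a < b" "continuous_on {a..b} f" "\<And>x. a < x \<Longrightarrow> x < b \<Longrightarrow> (f has_real_derivative f' x) (at x)"
  shows "\<exists>z. a < z \<and> z < b \<and> f b - f a = (b - a) * f' z"
  using MVT[OF assms(1,2)] assms(3) by (metis DERIV_unique real_differentiable_def)

lemma der_int:
  assumes "\<And>x. x \<in> {0..T} \<Longrightarrow> (f has_real_derivative D x) (at x within {0..T})"
    and "0 < x" "x < (T::real)"
  shows "(f has_real_derivative D x) (at x)"
proof -
  have "at x within {0..T} = at x" using assms(2,3) by (intro at_within_interior) auto
  with assms(1)[of x] assms(2,3) show ?thesis by auto
qed

lemma ddiff2:
  fixes v v1 v2 :: "real \<Rightarrow> real"
  assumes d1: "\<And>x. x \<in> {0..T} \<Longrightarrow> (v has_real_derivative v1 x) (at x within {0..T})"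
    and d2: "\<And>x. x \<in> {0..T} \<Longrightarrow> (v1 has_real_derivative v2 x) (at x within {0..T})"
    and h: "0 < h" "0 \<le> c - h" "c + h \<le> T"
  shows "\<exists>\<xi>. c - h \<le> \<xi> \<and> \<xi> \<le> c + h \<and> v (c+h) - 2 * v c + v (c-h) = h^2 * v2 \<xi>"
proof -
  define l where "l = (v (c+h) - 2 * v c + v (c-h)) / h^2"
  define g where "g x = v (c+x) + v (c-x) - 2 * v c - l * x^2" for x
  have cv: "continuous_on {0..T} v" by (rule DERIV_continuous_on[OF d1])
  have cv1: "continuous_on {0..T} v1" by (rule DERIV_continuous_on[OF d2])
  have cg: "continuous_on {0..h} g"
  proof -
    have a: "continuous_on {0..h} (\<lambda>x. v (c+x))"
      by (rule continuous_on_compose2[OF cv]) (use h in \<open>auto intro!: continuous_intros\<close>)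
    have b: "continuous_on {0..h} (\<lambda>x. v (c-x))"
      by (rule continuous_on_compose2[OF cv]) (use h in \<open>auto intro!: continuous_intros\<close>)
    show ?thesis unfolding g_def by (intro continuous_intros a b)
  qed
  have dg: "(g has_real_derivative (v1 (c+x) - v1 (c-x) - l * (2 * x))) (at x)" if "0 < x" "x < h" for x
  proof -
    have a: "(v has_real_derivative v1 (c+x)) (at (c+x))" by (rule der_int[OF d1]) (use that h in auto)
    have b: "(v has_real_derivative v1 (c-x)) (at (c-x))" by (rule der_int[OF d1]) (use that h in auto)
    have a': "((\<lambda>x. v (c+x)) has_real_derivative v1 (c+x) * 1) (at x)"
      by (rule DERIV_chain2[of v "v1 (c+x)" "\<lambda>y. c+y" x, OF a]) (auto intro!: derivative_eq_intros)
    have b': "((\<lambda>x. v (c-x)) has_real_derivative v1 (c-x) * (-1)) (at x)"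
      by (rule DERIV_chain2[of v "v1 (c-x)" "\<lambda>y. c-y" x, OF b]) (auto intro!: derivative_eq_intros)
    show ?thesis unfolding g_def
      by (auto intro!: derivative_eq_intros a' b' simp: power2_eq_square)
  qed
  obtain z where z: "0 < z" "z < h" "g h - g 0 = (h - 0) * (v1 (c+z) - v1 (c-z) - l * (2 * z))"
    using my_mvt[OF h(1) cg dg] by blast
  have "g h = 0" using h unfolding g_def l_def by (simp add: field_simps)
  moreover have "g 0 = 0" unfolding g_def by simp
  ultimately have e1: "v1 (c+z) - v1 (c-z) = 2 * z * l" using z h by simp
  have cz: "c - z < c + z" using z by simp
  have cv1': "continuous_on {c-z..c+z} v1" by (rule continuous_on_subset[OF cv1]) (use z h in auto)
  obtain \<xi> where xi: "c - z < \<xi>" "\<xi> < c + z" "v1 (c+z) - v1 (c-z) = (c + z - (c - z)) * v2 \<xi>"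
    using my_mvt[OF cz cv1', of v2] der_int[OF d2] z h by force
  have "l = v2 \<xi>" using e1 xi(3) z by simp
  then show ?thesis using xi z h unfolding l_def by (intro exI[of _ \<xi>]) (auto simp: field_simps)
qed

lemma dfirst:
  fixes v v1 v2 :: "real \<Rightarrow> real"
  assumes d1: "\<And>x. x \<in> {0..T} \<Longrightarrow> (v has_real_derivative v1 x) (at x within {0..T})"
    and d2: "\<And>x. x \<in> {0..T} \<Longrightarrow> (v1 has_real_derivative v2 x) (at x within {0..T})"
    and h: "0 < h" "h \<le> T"
  shows "\<exists>\<xi>. 0 \<le> \<xi> \<and> \<xi> \<le> h \<and> 2 * (v h - v 0 - h * v1 0) = h^2 * v2 \<xi>"
proof -
  define l where "l = (v h - v 0 - h * v1 0) / h^2"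
  define g where "g x = v x - v 0 - x * v1 0 - l * x^2" for x
  have cv: "continuous_on {0..T} v" by (rule DERIV_continuous_on[OF d1])
  have cv1: "continuous_on {0..T} v1" by (rule DERIV_continuous_on[OF d2])
  have cg: "continuous_on {0..h} g"
  proof -
    have a: "continuous_on {0..h} v" by (rule continuous_on_subset[OF cv]) (use h in auto)
    show ?thesis unfolding g_def by (intro continuous_intros a)
  qed
  have dg: "(g has_real_derivative (v1 x - v1 0 - l * (2 * x))) (at x)" if "0 < x" "x < h" for x
  proof -
    have a: "(v has_real_derivative v1 x) (at x)" by (rule der_int[OF d1]) (use that h in auto)
    show ?thesis unfolding g_def
      by (auto intro!: derivative_eq_intros a simp: power2_eq_square)
  qed
  obtain z where z: "0 < z" "z < h" "g h - g 0 = (h - 0) * (v1 z - v1 0 - l * (2 * z))"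
    using my_mvt[OF h(1) cg dg] by blast
  have "g h = 0" using h unfolding g_def l_def by (simp add: field_simps)
  moreover have "g 0 = 0" unfolding g_def by simp
  ultimately have e1: "v1 z - v1 0 = 2 * z * l" using z h by simp
  have cv1': "continuous_on {0..z} v1" by (rule continuous_on_subset[OF cv1]) (use z h in auto)
  obtain \<xi> where xi: "0 < \<xi>" "\<xi> < z" "v1 z - v1 0 = (z - 0) * v2 \<xi>"
    using my_mvt[OF z(1) cv1', of v2] der_int[OF d2] z h by force
  have "2 * l = v2 \<xi>" using e1 xi(3) z by simp
  then show ?thesis using xi z h unfolding l_def by (intro exI[of _ \<xi>]) (auto simp: field_simps)
qed

lemma osc:
  fixes v2 v3 :: "real \<Rightarrow> real"
  assumes c2: "continuous_on {0..T} v2"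
    and d3: "\<And>x. x \<in> {0<..T} \<Longrightarrow> (v2 has_real_derivative v3 x) (at x within {0..T})"
    and I: "(\<lambda>x. \<bar>v3 x\<bar>) integrable_on {0..T}"
    and h: "0 \<le> a" "a \<le> r" "r \<le> s" "s \<le> b" "b \<le> T"
  shows "\<bar>v2 s - v2 r\<bar> \<le> integral {a..b} (\<lambda>x. \<bar>v3 x\<bar>)"
proof -
  have ftc: "(v3 has_integral (v2 s - v2 r)) {r..s}"
  proof (rule fundamental_theorem_of_calculus_interior)
    show "r \<le> s" by fact
    show "continuous_on {r..s} v2" by (rule continuous_on_subset[OF c2]) (use h in auto)
    fix x assume x: "x \<in> {r<..<s}"
    have "at x within {0..T} = at x" using x h by (intro at_within_interior) auto
    with d3[of x] x h show "(v2 has_vector_derivative v3 x) (at x)"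
      by (auto simp: has_real_derivative_iff_has_vector_derivative)
  qed
  have Irs: "(\<lambda>x. \<bar>v3 x\<bar>) integrable_on {r..s}" by (rule integrable_on_subinterval[OF I]) (use h in auto)
  have Ias: "(\<lambda>x. \<bar>v3 x\<bar>) integrable_on {a..b}" by (rule integrable_on_subinterval[OF I]) (use h in auto)
  have "\<bar>v2 s - v2 r\<bar> = norm (integral {r..s} v3)" using ftc by (simp add: integral_unique)
  also have "\<dots> \<le> integral {r..s} (\<lambda>x. \<bar>v3 x\<bar>)"
    by (rule integral_norm_bound_integral[OF has_integral_integrable[OF ftc] Irs]) simp
  also have "\<dots> \<le> integral {a..b} (\<lambda>x. \<bar>v3 x\<bar>)"
    by (rule integral_subset_le[OF _ Irs Ias]) (use h in auto)
  finally show ?thesis .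
qed

lemma kern:
  fixes \<beta> :: real
  assumes "1 < \<beta>" "\<beta> < 2" "a \<le> b" "b \<le> T"
  shows "((\<lambda>s. (T - s) powr (1 - \<beta>)) has_integral ((T - a) powr (2-\<beta>) - (T - b) powr (2-\<beta>)) / (2-\<beta>)) {a..b}"
proof -
  define F where "F s = - ((T - s) powr (2-\<beta>)) / (2-\<beta>)" for s
  have "((\<lambda>s. (T - s) powr (1 - \<beta>)) has_integral (F b - F a)) {a..b}"
  proof (rule fundamental_theorem_of_calculus_interior)
    show "a \<le> b" by fact
    show "continuous_on {a..b} F" unfolding F_def
      by (intro continuous_intros continuous_on_powr') (use assms in auto)
    fix x assume x: "x \<in> {a<..<b}"
    have "((\<lambda>s. (T - s) powr (2-\<beta>)) has_real_derivative (2-\<beta>) * (T - x) powr ((2-\<beta>) - of_nat 1) * (0 - 1)) (at x)"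
      by (rule DERIV_fun_powr) (use x assms in \<open>auto intro!: derivative_eq_intros\<close>)
    then have "((\<lambda>s. -((T - s) powr (2-\<beta>)) / (2-\<beta>)) has_real_derivative
        (- ((2-\<beta>) * (T - x) powr ((2-\<beta>) - of_nat 1) * (0 - 1))) / (2-\<beta>)) (at x)"
      by (intro DERIV_cdivide DERIV_minus)
    moreover have "(2-\<beta>) - of_nat 1 = 1 - \<beta>" by simp
    ultimately have "(F has_real_derivative (T - x) powr (1 - \<beta>)) (at x)"
      unfolding F_def using assms by simp
    then show "(F has_vector_derivative (T - x) powr (1 - \<beta>)) (at x)"
      by (simp add: has_real_derivative_iff_has_vector_derivative)
  qed
  then show ?thesis unfolding F_def by (simp add: diff_divide_distrib)
qed

lemma combine:
  fixes f :: "real \<Rightarrow> real"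
  assumes "0 < \<tau>" "\<And>k. 1 \<le> k \<Longrightarrow> k \<le> m \<Longrightarrow> (f has_integral I k) {real (k-1) * \<tau>..real k * \<tau>}"
  shows "(f has_integral (\<Sum>k=1..m. I k)) {0..real m * \<tau>}"
  using assms(2)
proof (induction m)
  case 0
  then show ?case using has_integral_refl(1)[of f 0] by simp
next
  case (Suc m)
  have a: "(f has_integral (\<Sum>k=1..m. I k)) {0..real m * \<tau>}" using Suc by auto
  have b: "(f has_integral I (Suc m)) {real m * \<tau>..real (Suc m) * \<tau>}" using Suc.prems[of "Suc m"] by simp
  have "(f has_integral ((\<Sum>k=1..m. I k) + I (Suc m))) {0..real (Suc m) * \<tau>}"
    by (rule has_integral_combine[OF _ _ a b]) (use assms(1) in auto)
  then show ?case by simp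
qed

lemma aff:
  fixes v3 :: "real \<Rightarrow> real"
  assumes I: "(\<lambda>x. \<bar>v3 x\<bar>) integrable_on {0..T}" and t: "0 < \<tau>" "real (j+1) * \<tau> \<le> T"
  shows "(\<lambda>x. \<bar>v3 x\<bar>) integrable_on {real j * \<tau>..real (j+1) * \<tau>}"
    "integral {real j * \<tau>..real (j+1) * \<tau>} (\<lambda>x. \<bar>v3 x\<bar>) = \<tau> * integral {0..1} (\<lambda>\<theta>. \<bar>v3 (real j * \<tau> + \<theta> * \<tau>)\<bar>)"
proof -
  show Ij: "(\<lambda>x. \<bar>v3 x\<bar>) integrable_on {real j * \<tau>..real (j+1) * \<tau>}"
    by (rule integrable_on_subinterval[OF I]) (use t in auto)
  define i where "i = integral {real j * \<tau>..real (j+1) * \<tau>} (\<lambda>x. \<bar>v3 x\<bar>)"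
  have hi: "((\<lambda>x. \<bar>v3 x\<bar>) has_integral i) (cbox (real j * \<tau>) (real (j+1) * \<tau>))"
    using Ij unfolding i_def by (simp add: has_integral_integral)
  have "((\<lambda>x. \<bar>v3 (\<tau> *\<^sub>R x + real j * \<tau>)\<bar>) has_integral (i /\<^sub>R \<tau> ^ DIM(real)))
           (cbox ((real j * \<tau> - real j * \<tau>) /\<^sub>R \<tau>) ((real (j+1) * \<tau> - real j * \<tau>) /\<^sub>R \<tau>))"
    by (rule has_integral_affinity'[OF hi t(1)])
  then have "((\<lambda>\<theta>. \<bar>v3 (real j * \<tau> + \<theta> * \<tau>)\<bar>) has_integral (i / \<tau>)) {0..1}"
    using t by (simp add: algebra_simps cbox_interval divide_inverse)
  then have "integral {0..1} (\<lambda>\<theta>. \<bar>v3 (real j * \<tau> + \<theta> * \<tau>)\<bar>) = i / \<tau>" by (rule integral_unique)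
  then show "integral {real j * \<tau>..real (j+1) * \<tau>} (\<lambda>x. \<bar>v3 x\<bar>) = \<tau> * integral {0..1} (\<lambda>\<theta>. \<bar>v3 (real j * \<tau> + \<theta> * \<tau>)\<bar>)"
    using t unfolding i_def by simp
qed

lemma prodint:
  fixes K g :: "real \<Rightarrow> real"
  assumes "(K has_integral c) {a..b}" "\<And>x. x \<in> {a..b} \<Longrightarrow> 0 \<le> K x" "continuous_on {a..b} g"
  shows "(\<lambda>s. K s * g s) integrable_on {a..b}"
proof -
  have K: "K absolutely_integrable_on {a..b}"
    using assms(1,2) by (intro nonnegative_absolutely_integrable_1) auto
  have m: "g \<in> borel_measurable (lebesgue_on {a..b})"
    by (rule continuous_imp_measurable_on_sets_lebesgue[OF assms(3)]) auto
  have bd: "bounded (g ` {a..b})"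
    by (intro compact_imp_bounded compact_continuous_image assms(3)) auto
  have "(\<lambda>x. g x * K x) absolutely_integrable_on {a..b}"
    by (rule absolutely_integrable_bounded_measurable_product_real[OF m _ bd K]) auto
  then show ?thesis by (simp add: mult.commute set_lebesgue_integral_eq_integral(1))
qed



theorem lemma2:
  fixes v v1 v2 v3 :: "real \<Rightarrow> real" and \<beta> \<tau> :: real and n :: nat
  assumes beta: "1 < \<beta>" "\<beta> < 2"
    and tau: "0 < \<tau>"
    and n: "1 \<le> n"
    and d1: "\<And>x. x \<in> {0..real n * \<tau>} \<Longrightarrow> (v has_real_derivative v1 x) (at x within {0..real n * \<tau>})"
    and d2: "\<And>x. x \<in> {0..real n * \<tau>} \<Longrightarrow> (v1 has_real_derivative v2 x) (at x within {0..real n * \<tau>})"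
    and c2: "continuous_on {0..real n * \<tau>} v2"
    and d3: "\<And>x. x \<in> {0<..real n * \<tau>} \<Longrightarrow> (v2 has_real_derivative v3 x) (at x within {0..real n * \<tau>})"
    and c3: "continuous_on {0<..real n * \<tau>} v3"
    and L1: "v3 absolutely_integrable_on {0<..real n * \<tau>}"
  shows "\<bar>caputo \<beta> v2 (real n * \<tau>) - Delta_t \<beta> \<tau> v n
            + 2 * bcoef \<beta> (n - 1) / \<tau> powr (\<beta> - 1) * v1 0\<bar>
         \<le> 9 * (real n * \<tau>) powr (2 - \<beta>) / Gamma (3 - \<beta>)
            * Max ((\<lambda>k. integral {0..1} (\<lambda>\<theta>. \<bar>v3 (real k * \<tau> + \<theta> * \<tau>)\<bar>)) ` {0..n - 1})
            * \<tau>"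
proof -
  define T where "T = real n * \<tau>"
  define p where "p = 2 - \<beta>"
  define G where "G = Gamma (2 - \<beta>)"
  define K where "K s = (T - s) powr (1 - \<beta>)" for s
  define Ij where "Ij j = integral {0..1} (\<lambda>\<theta>. \<bar>v3 (real j * \<tau> + \<theta> * \<tau>)\<bar>)" for j
  define M where "M = Max (Ij ` {0..n - 1})"
  have T: "0 < T" "\<tau> \<le> T" using tau n unfolding T_def by (auto simp: mult_le_cancel_right1)
  have p: "0 < p" "p < 1" using beta unfolding p_def by auto
  have G: "0 < G" using beta unfolding G_def by auto
  have G3: "Gamma (3 - \<beta>) = p * G"
  proof -
    have "2 - \<beta> \<notin> \<int>\<^sub>\<le>\<^sub>0" using beta by (auto elim!: nonpos_Ints_cases)
    then have "Gamma ((2 - \<beta>) + 1) = (2 - \<beta>) * Gamma (2 - \<beta>)" by (rule Gamma_plus1)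
    moreover have "(2 - \<beta>) + 1 = 3 - \<beta>" by simp
    ultimately show ?thesis unfolding p_def G_def by simp
  qed
  have Iabs: "(\<lambda>x. \<bar>v3 x\<bar>) integrable_on {0..T}"
  proof -
    have "v3 absolutely_integrable_on {0..T}"
    proof -
      have "negligible {x \<in> {0..T} - {0<..T}. v3 x \<noteq> 0}"
        by (rule negligible_subset[of "{0}"]) auto
      moreover have "negligible {x \<in> {0<..T} - {0..T}. v3 x \<noteq> 0}"
        by (rule negligible_subset[of "{}"]) auto
      ultimately show ?thesis using L1 absolutely_integrable_spike_set_eq[of "{0<..T}" "{0..T}" v3]
        unfolding T_def by auto
    qed
    then show ?thesis by (simp add: absolutely_integrable_on_def)
  qed
  have IjM: "Ij j \<le> M" if "j \<le> n - 1" for j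
    unfolding M_def using that by (intro Max_ge) auto
  have Ij_int: "integral {real j * \<tau>..real (j+1) * \<tau>} (\<lambda>x. \<bar>v3 x\<bar>) = \<tau> * Ij j" if "j \<le> n - 1" for j
  proof -
    have "real (j+1) * \<tau> \<le> T" using that n tau unfolding T_def by (intro mult_right_mono) auto
    from aff(2)[OF Iabs tau this] show ?thesis unfolding Ij_def .
  qed
  have M0: "0 \<le> M"
  proof -
    have "real (0+1) * \<tau> \<le> T" using T by simp
    from aff(1)[OF Iabs tau this] have "0 \<le> integral {real 0 * \<tau>..real (0+1) * \<tau>} (\<lambda>x. \<bar>v3 x\<bar>)"
      by (intro integral_nonneg) auto
    then have "0 \<le> \<tau> * Ij 0" using Ij_int[of 0] by simp
    then have "0 \<le> Ij 0" using tau by (simp add: zero_le_mult_iff)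
    then show ?thesis using IjM[of 0] by simp
  qed
  define D where "D k = (if k = 1 then 2 * (v \<tau> - v 0 - \<tau> * v1 0) / \<tau>^2
     else (v (real k * \<tau>) - 2 * v (real (k - 1) * \<tau>) + v (real (k - 2) * \<tau>)) / \<tau>^2)" for k
  have d1': "\<And>x. x \<in> {0..T} \<Longrightarrow> (v has_real_derivative v1 x) (at x within {0..T})" using d1 unfolding T_def .
  have d2': "\<And>x. x \<in> {0..T} \<Longrightarrow> (v1 has_real_derivative v2 x) (at x within {0..T})" using d2 unfolding T_def .
  have c2': "continuous_on {0..T} v2" using c2 unfolding T_def .
  have d3': "\<And>x. x \<in> {0<..T} \<Longrightarrow> (v2 has_real_derivative v3 x) (at x within {0..T})" using d3 unfolding T_def .
  have W: "\<exists>\<xi>. D k = v2 \<xi> \<and> (\<forall>s\<in>{real (k-1) * \<tau>..real k * \<tau>}. \<bar>v2 s - v2 \<xi>\<bar> \<le> 2 * \<tau> * M)"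
    if k: "1 \<le> k" "k \<le> n" for k
  proof (cases "k = 1")
    case True
    obtain \<xi> where xi: "0 \<le> \<xi>" "\<xi> \<le> \<tau>" "2 * (v \<tau> - v 0 - \<tau> * v1 0) = \<tau>^2 * v2 \<xi>"
      using dfirst[OF d1' d2' tau T(2)] by blast
    have "D k = v2 \<xi>" using True xi(3) tau unfolding D_def by (simp add: field_simps)
    moreover have "\<bar>v2 s - v2 \<xi>\<bar> \<le> 2 * \<tau> * M" if s: "s \<in> {real (k-1) * \<tau>..real k * \<tau>}" for s
    proof -
      have "\<bar>v2 (max s \<xi>) - v2 (min s \<xi>)\<bar> \<le> integral {0..\<tau>} (\<lambda>x. \<bar>v3 x\<bar>)"
        by (rule osc[OF c2' d3' Iabs]) (use s xi True T in auto)
      also have "\<dots> = \<tau> * Ij 0" using Ij_int[of 0] by simp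
      also have "\<dots> \<le> 2 * \<tau> * M" using IjM[of 0] M0 tau by (simp add: mult_left_mono)
      finally show ?thesis by (cases "s \<le> \<xi>") (auto simp: max_def min_def abs_minus_commute)
    qed
    ultimately show ?thesis by blast
  next
    case False
    define j where "j = k - 2"
    have kj: "k = j + 2" using k False unfolding j_def by linarith
    define a0 where "a0 = real j * \<tau>"
    have a1: "real (j+1) * \<tau> = a0 + \<tau>" unfolding a0_def by (simp add: algebra_simps)
    have a2: "real (j+1+1) * \<tau> = a0 + 2 * \<tau>" unfolding a0_def by (simp add: algebra_simps)
    have a2': "real k * \<tau> = a0 + 2 * \<tau>" using a2 kj by simp
    have a1': "real (k-1) * \<tau> = a0 + \<tau>" using a1 kj by simp
    have a0': "real (k-2) * \<tau> = a0" using kj unfolding a0_def by simp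
    have a00: "0 \<le> a0" unfolding a0_def using tau by simp
    have kn: "real k * \<tau> \<le> T" using k tau unfolding T_def by (simp add: mult_right_mono)
    have hh: "0 \<le> (a0 + \<tau>) - \<tau>" "(a0 + \<tau>) + \<tau> \<le> T" using a00 kn a2' by auto
    obtain \<xi> where xi: "(a0 + \<tau>) - \<tau> \<le> \<xi>" "\<xi> \<le> (a0 + \<tau>) + \<tau>"
      "v ((a0 + \<tau>) + \<tau>) - 2 * v (a0 + \<tau>) + v ((a0 + \<tau>) - \<tau>) = \<tau>^2 * v2 \<xi>"
      using ddiff2[OF d1' d2' tau hh] by blast
    have e1: "(a0 + \<tau>) + \<tau> = a0 + 2 * \<tau>" "(a0 + \<tau>) - \<tau> = a0" by simp_all
    have "D k = v2 \<xi>" using False xi(3) tau unfolding D_def a2' a1' a0' e1 by (simp add: field_simps)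
    moreover have "\<bar>v2 s - v2 \<xi>\<bar> \<le> 2 * \<tau> * M" if s: "s \<in> {real (k-1) * \<tau>..real k * \<tau>}" for s
    proof -
      have s': "a0 + \<tau> \<le> s" "s \<le> a0 + 2 * \<tau>" using s a1' a2' by auto
      have "\<bar>v2 (max s \<xi>) - v2 (min s \<xi>)\<bar> \<le> integral {a0..a0 + 2 * \<tau>} (\<lambda>x. \<bar>v3 x\<bar>)"
      proof (rule osc[OF c2' d3' Iabs])
        show "0 \<le> a0" by fact
        show "a0 \<le> min s \<xi>" using s' xi tau by (simp add: min_def)
        show "min s \<xi> \<le> max s \<xi>" by simp
        show "max s \<xi> \<le> a0 + 2 * \<tau>" using s' xi tau by (simp add: max_def)
        show "a0 + 2 * \<tau> \<le> T" using kn a2' by simp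
      qed
      also have "\<dots> = integral {a0..a0 + \<tau>} (\<lambda>x. \<bar>v3 x\<bar>)
          + integral {a0 + \<tau>..a0 + 2 * \<tau>} (\<lambda>x. \<bar>v3 x\<bar>)"
      proof -
        have "(\<lambda>x. \<bar>v3 x\<bar>) integrable_on {a0..a0 + 2 * \<tau>}"
          by (rule integrable_on_subinterval[OF Iabs]) (use a00 kn a2' in auto)
        from Henstock_Kurzweil_Integration.integral_combine[where a=a0 and c="a0 + \<tau>" and b="a0 + 2 * \<tau>", OF _ _ this] tau show ?thesis by simp
      qed
      also have "\<dots> = \<tau> * Ij j + \<tau> * Ij (j+1)"
        using Ij_int[of j] Ij_int[of "j+1"] kj k unfolding a0_def[symmetric] a1 a2 by simp
      also have "\<dots> \<le> \<tau> * M + \<tau> * M"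
        using IjM[of j] IjM[of "j+1"] kj k tau by (intro add_mono mult_left_mono) auto
      finally show ?thesis by (cases "s \<le> \<xi>") (auto simp: max_def min_def abs_minus_commute mult_ac)
    qed
    ultimately show ?thesis by blast
  qed
  define KI where "KI k = ((T - real (k-1) * \<tau>) powr p - (T - real k * \<tau>) powr p) / p" for k
  have Kk: "(K has_integral KI k) {real (k-1) * \<tau>..real k * \<tau>}" if k: "1 \<le> k" "k \<le> n" for k
  proof -
    have "real (k-1) * \<tau> \<le> real k * \<tau>" using tau by (simp add: mult_right_mono)
    moreover have "real k * \<tau> \<le> T" using k tau unfolding T_def by (simp add: mult_right_mono)
    ultimately show ?thesis unfolding K_def KI_def p_def by (rule kern[OF beta])
  qed
  have Kpos: "0 \<le> K s" for s unfolding K_def by simp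
  have KIb: "KI k = G * \<tau> powr p * bcoef \<beta> (n-k)" if k: "1 \<le> k" "k \<le> n" for k
  proof -
    have e1: "T - real (k-1) * \<tau> = real (n-k+1) * \<tau>" using k unfolding T_def by (simp add: of_nat_diff algebra_simps)
    have e2: "T - real k * \<tau> = real (n-k) * \<tau>" using k unfolding T_def by (simp add: of_nat_diff algebra_simps)
    have b: "bcoef \<beta> (n-k) = (real (n-k+1) powr p - real (n-k) powr p) / (p * G)"
      using G3 unfolding bcoef_def p_def by simp
    show ?thesis unfolding KI_def e1 e2 powr_mult b using p G by (simp add: field_simps)
  qed
  have Pint: "(\<lambda>s. K s * v2 s) integrable_on {real (k-1) * \<tau>..real k * \<tau>}" if k: "1 \<le> k" "k \<le> n" for k
  proof (rule prodint[OF Kk[OF k]])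
    show "continuous_on {real (k-1) * \<tau>..real k * \<tau>} v2"
      by (rule continuous_on_subset[OF c2']) (use k tau in \<open>auto simp: T_def mult_right_mono\<close>)
  qed (rule Kpos)
  define J where "J k = integral {real (k-1) * \<tau>..real k * \<tau>} (\<lambda>s. K s * v2 s)" for k
  have bnd: "\<bar>J k - KI k * D k\<bar> \<le> 2 * \<tau> * M * KI k" if k: "1 \<le> k" "k \<le> n" for k
  proof -
    obtain \<xi> where xi: "D k = v2 \<xi>" "\<And>s. s \<in> {real (k-1) * \<tau>..real k * \<tau>} \<Longrightarrow> \<bar>v2 s - v2 \<xi>\<bar> \<le> 2 * \<tau> * M"
      using W[OF k] by blast
    have h1: "((\<lambda>s. K s * v2 s - K s * D k) has_integral (J k - KI k * D k)) {real (k-1) * \<tau>..real k * \<tau>}"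
      unfolding J_def by (intro has_integral_diff integrable_integral Pint[OF k] has_integral_mult_left Kk[OF k])
    have h2: "((\<lambda>s. K s * (2 * \<tau> * M)) has_integral (KI k * (2 * \<tau> * M))) {real (k-1) * \<tau>..real k * \<tau>}"
      by (intro has_integral_mult_left Kk[OF k])
    have "norm (integral {real (k-1) * \<tau>..real k * \<tau>} (\<lambda>s. K s * v2 s - K s * D k))
        \<le> integral {real (k-1) * \<tau>..real k * \<tau>} (\<lambda>s. K s * (2 * \<tau> * M))"
    proof (rule integral_norm_bound_integral[OF has_integral_integrable[OF h1] has_integral_integrable[OF h2]])
      fix s assume s: "s \<in> {real (k-1) * \<tau>..real k * \<tau>}"
      have "norm (K s * v2 s - K s * D k) = K s * \<bar>v2 s - v2 \<xi>\<bar>"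
        using Kpos[of s] xi(1) by (simp add: abs_mult right_diff_distrib[symmetric])
      also have "\<dots> \<le> K s * (2 * \<tau> * M)" by (rule mult_left_mono[OF xi(2)[OF s] Kpos])
      finally show "norm (K s * v2 s - K s * D k) \<le> K s * (2 * \<tau> * M)" .
    qed
    then have "\<bar>J k - KI k * D k\<bar> \<le> KI k * (2 * \<tau> * M)"
      by (simp only: integral_unique[OF h1] integral_unique[OF h2] real_norm_def)
    then show ?thesis by (simp add: mult_ac)
  qed
  have sumKI: "(\<Sum>k=1..n. KI k) = T powr p / p"
  proof -
    have A: "(K has_integral (\<Sum>k=1..n. KI k)) {0..T}"
      unfolding T_def by (rule combine[OF tau]) (rule Kk)
    have B: "(K has_integral ((T - 0) powr p - (T - T) powr p) / p) {0..T}"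
      unfolding K_def p_def by (rule kern[OF beta]) (use T in auto)
    have "((T - 0) powr p - (T - T) powr p) / p = T powr p / p" by simp
    with has_integral_unique[OF A B] show ?thesis by simp
  qed
  have cap: "caputo \<beta> v2 T = (1/G) * (\<Sum>k=1..n. J k)"
  proof -
    have "((\<lambda>s. K s * v2 s) has_integral (\<Sum>k=1..n. J k)) {0..real n * \<tau>}"
      by (rule combine[OF tau]) (unfold J_def, rule integrable_integral, rule Pint)
    then show ?thesis unfolding caputo_def G_def K_def T_def by (simp add: integral_unique)
  qed
  have tp: "\<tau> powr p = \<tau>^2 / \<tau> powr \<beta>" unfolding p_def using tau by (simp add: powr_diff)
  have tb: "\<tau> powr (\<beta> - 1) = \<tau> powr \<beta> / \<tau>" using tau by (simp add: powr_diff)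
  have q: "0 < \<tau> powr \<beta>" using tau by simp
  have del: "Delta_t \<beta> \<tau> v n - 2 * bcoef \<beta> (n-1) / \<tau> powr (\<beta>-1) * v1 0
      = (\<Sum>k=1..n. \<tau> powr p * bcoef \<beta> (n-k) * D k)"
  proof -
    have "{1..n} = insert 1 {2..n}" using n by auto
    then have s1: "(\<Sum>k=1..n. \<tau> powr p * bcoef \<beta> (n-k) * D k)
        = \<tau> powr p * bcoef \<beta> (n-1) * D 1 + (\<Sum>k=2..n. \<tau> powr p * bcoef \<beta> (n-k) * D k)"
      by simp
    have s2: "(\<Sum>k=2..n. \<tau> powr p * bcoef \<beta> (n-k) * D k)
        = 1 / \<tau> powr \<beta> * (\<Sum>k=2..n. bcoef \<beta> (n-k) * (v (real k * \<tau>) - 2 * v (real (k-1) * \<tau>) + v (real (k-2) * \<tau>)))"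
      unfolding sum_distrib_left
    proof (rule sum.cong[OF refl])
      fix k assume "k \<in> {2..n}"
      then have "k \<noteq> 1" by auto
      then show "\<tau> powr p * bcoef \<beta> (n-k) * D k = 1 / \<tau> powr \<beta> * (bcoef \<beta> (n-k) * (v (real k * \<tau>) - 2 * v (real (k-1) * \<tau>) + v (real (k-2) * \<tau>)))"
        unfolding D_def tp using tau q by (simp add: field_simps)
    qed
    show ?thesis unfolding s1 s2 Delta_t_def tb using tau q by (simp add: D_def tp field_simps)
  qed
  have eq: "caputo \<beta> v2 T - Delta_t \<beta> \<tau> v n + 2 * bcoef \<beta> (n-1) / \<tau> powr (\<beta>-1) * v1 0
      = (1/G) * (\<Sum>k=1..n. J k - KI k * D k)"
  proof -
    have "(\<Sum>k=1..n. \<tau> powr p * bcoef \<beta> (n-k) * D k) = (\<Sum>k=1..n. (1/G) * (KI k * D k))"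
      by (rule sum.cong[OF refl]) (use G KIb in auto)
    then show ?thesis unfolding cap using del
      by (simp add: sum_subtractf sum_distrib_left right_diff_distrib)
  qed
  have "\<bar>caputo \<beta> v2 T - Delta_t \<beta> \<tau> v n + 2 * bcoef \<beta> (n-1) / \<tau> powr (\<beta>-1) * v1 0\<bar>
      = (1/G) * \<bar>\<Sum>k=1..n. J k - KI k * D k\<bar>" unfolding eq using G by (simp add: abs_mult)
  also have "\<dots> \<le> (1/G) * (\<Sum>k=1..n. 2 * \<tau> * M * KI k)"
  proof (rule mult_left_mono)
    show "\<bar>\<Sum>k=1..n. J k - KI k * D k\<bar> \<le> (\<Sum>k=1..n. 2 * \<tau> * M * KI k)"
      by (rule order_trans[OF sum_abs sum_mono]) (use bnd in auto)
  qed (use G in simp)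
  also have "\<dots> = 2 * \<tau> * M * T powr p / (p * G)"
    unfolding sum_distrib_left[symmetric] sumKI using G p by (simp add: field_simps)
  also have "\<dots> \<le> 9 * T powr p / (p * G) * M * \<tau>"
  proof -
    define X where "X = \<tau> * M * T powr p / (p * G)"
    have "0 \<le> X" unfolding X_def using tau M0 G p by simp
    moreover have "2 * \<tau> * M * T powr p / (p * G) = 2 * X" unfolding X_def by simp
    moreover have "9 * T powr p / (p * G) * M * \<tau> = 9 * X" unfolding X_def by simp
    ultimately show ?thesis by linarith
  qed
  finally show ?thesis unfolding G3[symmetric] unfolding p_def T_def M_def Ij_def .
qed
end
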